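(* For every $n\ge1$, $$\mathrm{vol}\,C(\mathbb{A}_n)=\sum_{i=1}^{n}\binom{n-1}{i-1}\binom{n+1}{i}=\binom{2n}{n}.$$
   Context: Let $\Phi^+=\{e_i+e_{i+1}+\dots+e_j: 1\le i\le j\le n\}\subset\mathbb{Z}^n$ and $C(\mathbb{A}_n)=\mathrm{conv}(\Phi^+\cup(-\Phi^+))\subset\mathbb{R}^n$, the convex hull of all roots of the root system $\mathbb{A}_n$ written in the basis of simple roots. The integral volume $\mathrm{vol}$ on $\mathbb{R}^n$ is $n!$ times Lebesgue measure. *)

theory Defs
  imports "HOL-Analysis.Analysis"
begin

text \<open>Coordinates of R^n are indexed by a finite linearly ordered type 'n
  (isomorphic to {1..n} with n = CARD('n)). The positive root
  e_i + ... + e_j (i \<le> j) in the basis of simple roots:\<close>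

definition interval_root :: "'n::{finite,linorder} \<Rightarrow> 'n::{finite,linorder} \<Rightarrow> real^('n::{finite,linorder})" where
  "interval_root i j = (\<chi> k. if i \<le> k \<and> k \<le> j then 1 else 0)"

definition pos_roots_A :: "(real^('n::{finite,linorder})) set" where
  "pos_roots_A = {interval_root i j | i j. i \<le> j}"

definition root_polytope_A :: "(real^('n::{finite,linorder})) set" where
  "root_polytope_A = convex hull (pos_roots_A \<union> uminus ` pos_roots_A)"

definition int_vol :: "(real^('n::finite)) set \<Rightarrow> real" where
  "int_vol S = fact CARD('n) * measure lebesgue S"

end

theory Submission
  imports Defs
begin


definition EE :: "'b set \<Rightarrow> real \<Rightarrow> real \<Rightarrow> ('b \<Rightarrow> real) set" where
  "EE A s t = {f. (\<Sum>i\<in>A. max (f i) 0) \<le> s \<and> (\<Sum>i\<in>A. max (- f i) 0) \<le> t}"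

definition hh :: "'b set \<Rightarrow> real \<Rightarrow> real \<Rightarrow> real" where
  "hh A s t = (\<Sum>S\<in>Pow A. s ^ card S / fact (card S) * (t ^ card (A - S) / fact (card (A - S))))"

lemma EE_meas[measurable]: "finite A \<Longrightarrow> EE A s t \<inter> space (Pi\<^sub>M A (\<lambda>_. lborel)) \<in> sets (Pi\<^sub>M A (\<lambda>_. lborel))"
proof -
  assume "finite A"
  have "EE A s t \<inter> space (Pi\<^sub>M A (\<lambda>_. lborel)) = {f \<in> space (Pi\<^sub>M A (\<lambda>_. lborel)). (\<Sum>i\<in>A. max (f i) 0) \<le> s \<and> (\<Sum>i\<in>A. max (- f i) 0) \<le> t}"
    by (auto simp: EE_def)
  also have "\<dots> \<in> sets (Pi\<^sub>M A (\<lambda>_. lborel))" using \<open>finite A\<close> by measurable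
  finally show ?thesis .
qed

lemma EE_step:
  assumes "b \<notin> A" "finite A"
  shows "x(b := y) \<in> EE (insert b A) s t \<longleftrightarrow>
    (0 \<le> y \<and> y \<le> s \<and> x \<in> EE A (s - y) t) \<or> (y < 0 \<and> -t \<le> y \<and> x \<in> EE A s (t + y))"
proof -
  have e1: "(\<Sum>i\<in>A. max ((x(b:=y)) i) 0) = (\<Sum>i\<in>A. max (x i) 0)"
    using assms by (intro sum.cong) auto
  have e2: "(\<Sum>i\<in>A. max (- (x(b:=y)) i) 0) = (\<Sum>i\<in>A. max (- x i) 0)"
    using assms by (intro sum.cong) auto
  have n1: "(\<Sum>i\<in>A. max (x i) 0) \<ge> 0" by (intro sum_nonneg) auto
  have n2: "(\<Sum>i\<in>A. max (- x i) 0) \<ge> 0" by (intro sum_nonneg) auto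
  show ?thesis using assms e1 e2 n1 n2 unfolding EE_def
    by (auto simp: sum.insert)
qed



lemma int_L1:
  fixes s c :: real and k :: nat
  assumes "s \<ge> 0" "c \<ge> 0"
  shows "(\<integral>\<^sup>+ y. ennreal (indicator {0..s} y * ((s - y) ^ k / fact k * c)) \<partial>lborel)
       = ennreal (s ^ Suc k / fact (Suc k) * c)"
proof -
  have "(\<integral>\<^sup>+ y. ennreal (indicator {0..s} y * ((s - y) ^ k / fact k * c)) \<partial>lborel)
      = (\<integral>\<^sup>+ y. ennreal ((s - y) ^ k / fact k * c) * indicator {0..s} y \<partial>lborel)"
    by (intro nn_integral_cong) (auto simp: indicator_def)
  also have "\<dots> = ennreal ((- ((s - s) ^ Suc k / fact (Suc k) * c)) - (- ((s - 0) ^ Suc k / fact (Suc k) * c)))"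
  proof (rule nn_integral_FTC_Icc)
    show "((\<lambda>y. - ((s - y) ^ Suc k / fact (Suc k) * c)) has_real_derivative (s - x) ^ k / fact k * c) (at x)" for x
    proof -
      have "((\<lambda>y. (s - y) ^ Suc k) has_real_derivative (real (Suc k) * (s - x) ^ k * (-1))) (at x)"
        by (rule derivative_eq_intros refl | simp)+
      note d = DERIV_cmult[OF this, of "- c / fact (Suc k)"]
      have v: "- c / fact (Suc k) * (real (Suc k) * (s - x) ^ k * - 1) = (s - x) ^ k / fact k * c"
      proof -
        have "fact k + fact k * real k > (0::real)"
          by (intro add_pos_nonneg) auto
        then show ?thesis by (simp add: fact_Suc field_simps)
      qed
      have f: "(\<lambda>y. - ((s - y) ^ Suc k / fact (Suc k) * c)) = (\<lambda>y. - c / fact (Suc k) * (s - y) ^ Suc k)"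
        by (simp add: fun_eq_iff field_simps)
      show ?thesis using d unfolding f v .
    qed
    show "\<And>x. x \<in> {0..s} \<Longrightarrow> 0 \<le> (s - x) ^ k / fact k * c" using assms by auto
  qed (use assms in auto)
  also have "\<dots> = ennreal (s ^ Suc k / fact (Suc k) * c)" using assms by simp
  finally show ?thesis .
qed

lemma int_L2:
  fixes t c :: real and k :: nat
  assumes "t \<ge> 0" "c \<ge> 0"
  shows "(\<integral>\<^sup>+ y. ennreal (indicator {-t..<0} y * (c * ((t + y) ^ k / fact k))) \<partial>lborel)
       = ennreal (c * (t ^ Suc k / fact (Suc k)))"
proof -
  have "(\<integral>\<^sup>+ y. ennreal (indicator {-t..<0} y * (c * ((t + y) ^ k / fact k))) \<partial>lborel)
      = (\<integral>\<^sup>+ y. ennreal (c * ((t + y) ^ k / fact k)) * indicator {-t..0} y \<partial>lborel)"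
    by (intro nn_integral_cong_AE, use AE_lborel_singleton[of 0] in eventually_elim) (auto simp: indicator_def)
  also have "\<dots> = ennreal ((c * ((t + 0) ^ Suc k / fact (Suc k))) - (c * ((t + - t) ^ Suc k / fact (Suc k))))"
  proof (rule nn_integral_FTC_Icc)
    show "((\<lambda>y. c * ((t + y) ^ Suc k / fact (Suc k))) has_real_derivative c * ((t + x) ^ k / fact k)) (at x)" for x
    proof -
      have "((\<lambda>y. (t + y) ^ Suc k) has_real_derivative (real (Suc k) * (t + x) ^ k * 1)) (at x)"
        by (rule derivative_eq_intros refl | simp)+
      note d = DERIV_cmult[OF this, of "c / fact (Suc k)"]
      have v: "c / fact (Suc k) * (real (Suc k) * (t + x) ^ k * 1) = c * ((t + x) ^ k / fact k)"
      proof -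
        have "fact k + fact k * real k > (0::real)"
          by (intro add_pos_nonneg) auto
        then show ?thesis by (simp add: fact_Suc field_simps)
      qed
      have f: "(\<lambda>y. c * ((t + y) ^ Suc k / fact (Suc k))) = (\<lambda>y. c / fact (Suc k) * (t + y) ^ Suc k)"
        by (simp add: fun_eq_iff field_simps)
      show ?thesis using d unfolding f v .
    qed
    show "\<And>x. x \<in> {-t..0} \<Longrightarrow> 0 \<le> c * ((t + x) ^ k / fact k)" using assms by auto
  qed (use assms in auto)
  also have "\<dots> = ennreal (c * (t ^ Suc k / fact (Suc k)))" using assms by simp
  finally show ?thesis .
qed



lemma hh_meas1[measurable]: "(\<lambda>y. hh A (s - y) t) \<in> borel_measurable borel"
  unfolding hh_def by measurable
lemma hh_meas2[measurable]: "(\<lambda>y. hh A s (t + y)) \<in> borel_measurable borel"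
  unfolding hh_def by measurable

lemma hh_insert:
  assumes "finite A" "b \<notin> A"
  shows "hh (insert b A) s t =
     (\<Sum>S\<in>Pow A. s ^ Suc (card S) / fact (Suc (card S)) * (t ^ card (A - S) / fact (card (A - S))))
   + (\<Sum>S\<in>Pow A. s ^ card S / fact (card S) * (t ^ Suc (card (A - S)) / fact (Suc (card (A - S)))))"
proof -
  have fP: "finite (Pow A)" using assms by simp
  have dis: "Pow A \<inter> insert b ` Pow A = {}" using assms by auto
  have inj: "inj_on (insert b) (Pow A)" using assms by (auto simp: inj_on_def)
  have "hh (insert b A) s t = (\<Sum>S\<in>Pow A. s ^ card S / fact (card S) * (t ^ card (insert b A - S) / fact (card (insert b A - S))))
      + (\<Sum>S\<in>insert b ` Pow A. s ^ card S / fact (card S) * (t ^ card (insert b A - S) / fact (card (insert b A - S))))"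
    unfolding hh_def Pow_insert using fP dis by (subst sum.union_disjoint) auto
  also have "(\<Sum>S\<in>insert b ` Pow A. s ^ card S / fact (card S) * (t ^ card (insert b A - S) / fact (card (insert b A - S))))
     = (\<Sum>S\<in>Pow A. s ^ Suc (card S) / fact (Suc (card S)) * (t ^ card (A - S) / fact (card (A - S))))"
  proof -
    have "(s ^ card (insert b S) / fact (card (insert b S)) * (t ^ card (insert b A - insert b S) / fact (card (insert b A - insert b S))))
      = s ^ Suc (card S) / fact (Suc (card S)) * (t ^ card (A - S) / fact (card (A - S)))" if S: "S \<in> Pow A" for S
    proof -
      have "finite S" "b \<notin> S" using assms S finite_subset by auto
      moreover have "insert b A - insert b S = A - S" using assms S by auto
      ultimately show ?thesis by simp
    qed
    then show ?thesis by (subst sum.reindex[OF inj]) (auto intro!: sum.cong)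
  qed
  also have "(\<Sum>S\<in>Pow A. s ^ card S / fact (card S) * (t ^ card (insert b A - S) / fact (card (insert b A - S))))
     = (\<Sum>S\<in>Pow A. s ^ card S / fact (card S) * (t ^ Suc (card (A - S)) / fact (Suc (card (A - S)))))"
  proof (intro sum.cong refl)
    fix S assume S: "S \<in> Pow A"
    have "insert b A - S = insert b (A - S)" using assms S by auto
    moreover have "finite (A - S)" "b \<notin> A - S" using assms by auto
    ultimately show "s ^ card S / fact (card S) * (t ^ card (insert b A - S) / fact (card (insert b A - S))) =
      s ^ card S / fact (card S) * (t ^ Suc (card (A - S)) / fact (Suc (card (A - S))))" by simp
  qed
  finally show ?thesis by simp
qed

lemma hh_nonneg: "s \<ge> 0 \<Longrightarrow> t \<ge> 0 \<Longrightarrow> hh A s t \<ge> 0"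
  unfolding hh_def by (intro sum_nonneg) auto

lemma EE_emeasure:
  assumes "finite A" "s \<ge> 0" "t \<ge> 0"
  shows "emeasure (Pi\<^sub>M A (\<lambda>_. lborel)) (EE A s t \<inter> space (Pi\<^sub>M A (\<lambda>_. lborel))) = ennreal (hh A s t)"
  using assms
proof (induction arbitrary: s t rule: finite_induct)
  case empty
  then show ?case by (simp add: PiM_empty EE_def hh_def)
next
  case (insert b A s t)
  let ?M = "\<lambda>A. (Pi\<^sub>M A (\<lambda>_. lborel :: real measure))"
  interpret product_sigma_finite "\<lambda>_. lborel :: real measure"
    by standard
  have "emeasure (?M (insert b A)) (EE (insert b A) s t \<inter> space (?M (insert b A))) =
        nn_integral (?M (insert b A)) (\<lambda>x. indicator (EE (insert b A) s t \<inter> space (?M (insert b A))) x)"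
    using insert.hyps by (subst nn_integral_indicator) auto
  also have "\<dots> = (\<integral>\<^sup>+ y. \<integral>\<^sup>+ x. indicator (EE (insert b A) s t \<inter> space (?M (insert b A)))
                    (x(b := y)) \<partial>?M A \<partial>lborel)"
    using insert.prems insert.hyps by (intro product_nn_integral_insert_rev) auto
  also have "\<dots> = (\<integral>\<^sup>+ y. \<integral>\<^sup>+ x. ennreal (indicator {0..s} y) * indicator (EE A (s - y) t \<inter> space (?M A)) x
         + ennreal (indicator {-t..<0} y) * indicator (EE A s (t + y) \<inter> space (?M A)) x \<partial>?M A \<partial>lborel)"
  proof (intro nn_integral_cong)
    fix y x assume x: "x \<in> space (?M A)"
    have sp: "x(b := y) \<in> space (?M (insert b A))"
      using x by (auto simp: space_PiM PiE_def extensional_def)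
    show "indicator (EE (insert b A) s t \<inter> space (?M (insert b A))) (x(b := y)) =
      ennreal (indicator {0..s} y) * indicator (EE A (s - y) t \<inter> space (?M A)) x
         + ennreal (indicator {-t..<0} y) * indicator (EE A s (t + y) \<inter> space (?M A)) x"
      using EE_step[OF insert.hyps(2,1), of x y s t] sp x
      by (auto simp: indicator_def)
  qed
  also have "\<dots> = (\<integral>\<^sup>+ y. ennreal (indicator {0..s} y) * emeasure (?M A) (EE A (s - y) t \<inter> space (?M A))
         + ennreal (indicator {-t..<0} y) * emeasure (?M A) (EE A s (t + y) \<inter> space (?M A)) \<partial>lborel)"
    using insert.hyps
    by (intro nn_integral_cong) (simp add: nn_integral_add nn_integral_cmult nn_integral_indicator)
  also have "\<dots> = (\<integral>\<^sup>+ y. ennreal (indicator {0..s} y * hh A (s - y) t)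
         + ennreal (indicator {-t..<0} y * hh A s (t + y)) \<partial>lborel)"
  proof (intro nn_integral_cong)
    fix y :: real
    show "ennreal (indicator {0..s} y) * emeasure (?M A) (EE A (s - y) t \<inter> space (?M A))
         + ennreal (indicator {-t..<0} y) * emeasure (?M A) (EE A s (t + y) \<inter> space (?M A)) =
        ennreal (indicator {0..s} y * hh A (s - y) t) + ennreal (indicator {-t..<0} y * hh A s (t + y))"
      using insert.IH[of "s - y" t] insert.IH[of s "t + y"] insert.prems
      by (auto simp: indicator_def)
  qed
  also have "\<dots> = (\<integral>\<^sup>+ y. ennreal (indicator {0..s} y * hh A (s - y) t) \<partial>lborel)
       + (\<integral>\<^sup>+ y. ennreal (indicator {-t..<0} y * hh A s (t + y)) \<partial>lborel)"
    by (rule nn_integral_add) auto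
  also have "(\<integral>\<^sup>+ y. ennreal (indicator {0..s} y * hh A (s - y) t) \<partial>lborel)
     = (\<integral>\<^sup>+ y. (\<Sum>S\<in>Pow A. ennreal (indicator {0..s} y * ((s - y) ^ card S / fact (card S) * (t ^ card (A - S) / fact (card (A - S)))))) \<partial>lborel)"
  proof (intro nn_integral_cong)
    fix y :: real
    show "ennreal (indicator {0..s} y * hh A (s - y) t) = (\<Sum>S\<in>Pow A. ennreal (indicator {0..s} y * ((s - y) ^ card S / fact (card S) * (t ^ card (A - S) / fact (card (A - S))))))"
      using insert.prems
      by (cases "y \<in> {0..s}") (auto simp: hh_def sum_distrib_left)
  qed
  also have "\<dots> = (\<Sum>S\<in>Pow A. \<integral>\<^sup>+ y. ennreal (indicator {0..s} y * ((s - y) ^ card S / fact (card S) * (t ^ card (A - S) / fact (card (A - S))))) \<partial>lborel)"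
    by (rule nn_integral_sum) auto
  also have "\<dots> = (\<Sum>S\<in>Pow A. ennreal (s ^ Suc (card S) / fact (Suc (card S)) * (t ^ card (A - S) / fact (card (A - S)))))"
    using insert.prems by (intro sum.cong refl int_L1) auto
  also have "(\<integral>\<^sup>+ y. ennreal (indicator {-t..<0} y * hh A s (t + y)) \<partial>lborel)
     = (\<integral>\<^sup>+ y. (\<Sum>S\<in>Pow A. ennreal (indicator {-t..<0} y * (s ^ card S / fact (card S) * ((t + y) ^ card (A - S) / fact (card (A - S)))))) \<partial>lborel)"
  proof (intro nn_integral_cong)
    fix y :: real
    show "ennreal (indicator {-t..<0} y * hh A s (t + y)) = (\<Sum>S\<in>Pow A. ennreal (indicator {-t..<0} y * (s ^ card S / fact (card S) * ((t + y) ^ card (A - S) / fact (card (A - S))))))"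
      using insert.prems
      by (cases "y \<in> {-t..<0}") (auto simp: hh_def sum_distrib_left)
  qed
  also have "\<dots> = (\<Sum>S\<in>Pow A. \<integral>\<^sup>+ y. ennreal (indicator {-t..<0} y * (s ^ card S / fact (card S) * ((t + y) ^ card (A - S) / fact (card (A - S))))) \<partial>lborel)"
    by (rule nn_integral_sum) auto
  also have "\<dots> = (\<Sum>S\<in>Pow A. ennreal (s ^ card S / fact (card S) * (t ^ Suc (card (A - S)) / fact (Suc (card (A - S))))))"
    using insert.prems by (intro sum.cong refl int_L2) auto
  also have "(\<Sum>S\<in>Pow A. ennreal (s ^ Suc (card S) / fact (Suc (card S)) * (t ^ card (A - S) / fact (card (A - S)))))
      + (\<Sum>S\<in>Pow A. ennreal (s ^ card S / fact (card S) * (t ^ Suc (card (A - S)) / fact (Suc (card (A - S))))))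
      = ennreal (hh (insert b A) s t)"
    using insert.prems insert.hyps
    by (simp add: hh_insert sum_nonneg ennreal_plus[symmetric] del: ennreal_plus)
  finally show ?case .
qed



lemma hh_11:
  assumes "finite A"
  shows "hh A 1 1 = real ((2 * card A) choose card A) / fact (card A)"
proof -
  let ?n = "card A"
  have "hh A 1 1 = (\<Sum>S\<in>Pow A. 1 / (fact (card S) * fact (?n - card S)))"
    unfolding hh_def using assms by (intro sum.cong refl) (auto simp: card_Diff_subset finite_subset)
  also have "\<dots> = (\<Sum>k\<in>{..?n}. (\<Sum>S\<in>{S\<in>Pow A. card S = k}. 1 / (fact (card S) * fact (?n - card S))))"
    using assms by (intro sum.group[symmetric]) (auto simp: card_mono)
  also have "\<dots> = (\<Sum>k\<in>{..?n}. real (?n choose k) * (1 / (fact k * fact (?n - k))))"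
  proof (intro sum.cong refl)
    fix k
    have "(\<Sum>S\<in>{S\<in>Pow A. card S = k}. 1 / (fact (card S) * fact (?n - card S)))
       = (\<Sum>S\<in>{S\<in>Pow A. card S = k}. 1 / (fact k * (fact (?n - k) :: real)))"
      by (intro sum.cong) auto
    also have "\<dots> = real (card {S\<in>Pow A. card S = k}) * (1 / (fact k * fact (?n - k)))" by simp
    also have "card {S\<in>Pow A. card S = k} = ?n choose k"
    proof -
      have "{S\<in>Pow A. card S = k} = {B. B \<subseteq> A \<and> card B = k}" by auto
      then show ?thesis using n_subsets[OF assms] by simp
    qed
    finally show "(\<Sum>S\<in>{S\<in>Pow A. card S = k}. 1 / (fact (card S) * fact (?n - card S))) = real (?n choose k) * (1 / (fact k * fact (?n - k)))" .
  qed
  also have "\<dots> = (\<Sum>k\<in>{..?n}. real ((?n choose k) ^ 2) / fact ?n)"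
  proof (intro sum.cong refl)
    fix k assume "k \<in> {..?n}"
    then have "real (?n choose k) = fact ?n / (fact k * fact (?n - k))" by (simp add: binomial_fact)
    then show "real (?n choose k) * (1 / (fact k * fact (?n - k))) = real ((?n choose k) ^ 2) / fact ?n"
      by (simp add: power2_eq_square field_simps)
  qed
  also have "\<dots> = real (\<Sum>k\<le>?n. (?n choose k) ^ 2) / fact ?n"
    by (simp add: sum_divide_distrib)
  also have "\<dots> = real ((2 * ?n) choose ?n) / fact ?n" by (simp only: choose_square_sum)
  finally show ?thesis .
qed

definition YY :: "'a::euclidean_space set" where
  "YY = {y. (\<Sum>b\<in>Basis. max (y \<bullet> b) 0) \<le> 1 \<and> (\<Sum>b\<in>Basis. max (- (y \<bullet> b)) 0) \<le> 1}"

lemma YY_closed: "closed (YY :: 'a::euclidean_space set)"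
  unfolding YY_def
  by (intro closed_Collect_conj closed_Collect_le continuous_intros)

lemma YY_bounded: "bounded (YY :: 'a::euclidean_space set)"
proof -
  have "norm y \<le> (\<Sum>b\<in>Basis. \<bar>y \<bullet> b\<bar>)" for y :: 'a by (rule norm_le_l1)
  moreover have "(\<Sum>b\<in>Basis. \<bar>y \<bullet> b\<bar>) \<le> 2" if "y \<in> YY" for y :: 'a
  proof -
    have "(\<Sum>b\<in>Basis. \<bar>y \<bullet> b\<bar>) = (\<Sum>b\<in>Basis. max (y \<bullet> b) 0) + (\<Sum>b\<in>Basis. max (- (y \<bullet> b)) 0)"
      by (simp add: sum.distrib[symmetric]) (intro sum.cong; auto)
    then show ?thesis using that unfolding YY_def by auto
  qed
  ultimately show ?thesis unfolding bounded_iff by (meson order_trans)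
qed

lemma YY_emeasure: "emeasure lborel (YY :: 'a::euclidean_space set) = ennreal (hh (Basis :: 'a set) 1 1)"
proof -
  have [measurable]: "(YY :: 'a set) \<in> sets borel" using YY_closed by (rule borel_closed)
  have "emeasure lborel (YY :: 'a set) = emeasure (distr (Pi\<^sub>M Basis (\<lambda>b. lborel)) borel (\<lambda>f. \<Sum>b\<in>Basis. f b *\<^sub>R b)) (YY :: 'a set)"
    by (rule arg_cong[where f="\<lambda>M. emeasure M YY"], rule lborel_eq)
  also have "\<dots> = emeasure (Pi\<^sub>M Basis (\<lambda>b. lborel)) ((\<lambda>f. \<Sum>b\<in>(Basis::'a set). f b *\<^sub>R b) -` YY \<inter> space (Pi\<^sub>M Basis (\<lambda>b. lborel)))"
    by (subst emeasure_distr) auto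
  also have "(\<lambda>f. \<Sum>b\<in>(Basis::'a set). f b *\<^sub>R b) -` YY \<inter> space (Pi\<^sub>M Basis (\<lambda>b. lborel)) = EE Basis 1 1 \<inter> space (Pi\<^sub>M Basis (\<lambda>b. lborel))"
  proof -
    have "(\<Sum>b\<in>(Basis::'a set). f b *\<^sub>R b) \<bullet> c = f c" if "c \<in> Basis" for f c
      using that by (simp add: inner_sum_left inner_Basis if_distrib cong: if_cong)
    then show ?thesis unfolding YY_def EE_def by (auto cong: sum.cong)
  qed
  also have "emeasure (Pi\<^sub>M Basis (\<lambda>b. lborel)) \<dots> = ennreal (hh (Basis :: 'a set) 1 1)"
    by (rule EE_emeasure) auto
  finally show ?thesis .
qed

lemma YY_measure: "measure lebesgue (YY :: 'a::euclidean_space set) = real ((2 * DIM('a)) choose DIM('a)) / fact DIM('a)"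
proof -
  have b: "(YY :: 'a set) \<in> sets borel" using YY_closed by (rule borel_closed)
  have "measure lebesgue (YY :: 'a set) = measure lborel (YY :: 'a set)" using b by simp
  also have "\<dots> = hh (Basis :: 'a set) 1 1" unfolding measure_def YY_emeasure
    by (simp add: hh_nonneg)
  also have "\<dots> = real ((2 * DIM('a)) choose DIM('a)) / fact DIM('a)" by (simp add: hh_11)
  finally show ?thesis .
qed



definition Ev :: "'n option \<Rightarrow> real^('n::finite)" where
  "Ev a = (case a of None \<Rightarrow> 0 | Some k \<Rightarrow> axis k 1)"

definition Rt :: "(real^('n::finite)) set" where
  "Rt = {Ev a - Ev b | a b. a \<noteq> b}"

definition Yv :: "(real^('n::finite)) set" where
  "Yv = {y. (\<Sum>k\<in>UNIV. max (y$k) 0) \<le> 1 \<and> (\<Sum>k\<in>UNIV. max (- (y$k)) 0) \<le> 1}"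

lemma Ev_nth: "Ev a $ k = (if a = Some k then 1 else 0)"
  by (cases a) (auto simp: Ev_def axis_def)

lemma sum_option: "(\<Sum>a\<in>(UNIV :: 'n::finite option set). f a) = f None + (\<Sum>k\<in>UNIV. f (Some k))"
proof -
  have "(\<Sum>a\<in>(UNIV :: 'n option set). f a) = (\<Sum>a\<in>insert None (range Some). f a)"
    by (simp only: UNIV_option_conv[symmetric])
  also have "\<dots> = f None + (\<Sum>a\<in>range Some. f a)" by (subst sum.insert) auto
  also have "(\<Sum>a\<in>range Some. f a) = (\<Sum>k\<in>UNIV. f (Some k))" by (subst sum.reindex) auto
  finally show ?thesis .
qed

lemma sum_delta_Some: "(\<Sum>k\<in>(UNIV::'n::finite set). (if a = Some k then c k else 0)) = (case a of None \<Rightarrow> 0 | Some j \<Rightarrow> c j)"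
  by (cases a) auto

lemma Basis_vec_real: "(Basis :: (real^'n) set) = range (\<lambda>k. axis k 1)"
  unfolding Basis_vec_def by auto

lemma Yv_YY: "(Yv :: (real^('n::finite)) set) = YY"
proof -
  have "(\<Sum>b\<in>(Basis :: (real^'n) set). g (y \<bullet> b)) = (\<Sum>k\<in>UNIV. g (y $ k))" for g :: "real \<Rightarrow> real" and y :: "real^'n"
  proof -
    have inj: "inj (\<lambda>k::'n. axis k (1::real))" by (auto simp: inj_on_def axis_eq_axis)
    show ?thesis unfolding Basis_vec_real by (subst sum.reindex[OF inj]) (simp add: inner_axis)
  qed
  note h = this
  show ?thesis unfolding Yv_def YY_def using h[of "\<lambda>z. max z 0"] h[of "\<lambda>z. max (- z) 0"] by simp
qed

lemma max_convex: "u \<ge> 0 \<Longrightarrow> v \<ge> 0 \<Longrightarrow> max (u * a + v * b) 0 \<le> u * max a 0 + v * max (b::real) 0"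
  by (smt (verit) mult_left_mono mult_nonneg_nonneg)

lemma Yv_convex: "convex (Yv :: (real^('n::finite)) set)"
  unfolding convex_def
proof (intro ballI allI impI)
  fix x y :: "real^'n" and u v :: real
  assume x: "x \<in> Yv" and y: "y \<in> Yv" and uv: "0 \<le> u" "0 \<le> v" "u + v = 1"
  have "(\<Sum>k\<in>UNIV. max ((u *\<^sub>R x + v *\<^sub>R y) $ k) 0) \<le> (\<Sum>k\<in>UNIV. u * max (x$k) 0 + v * max (y$k) 0)"
    using max_convex[OF uv(1,2)] by (intro sum_mono) simp
  also have "\<dots> = u * (\<Sum>k\<in>UNIV. max (x$k) 0) + v * (\<Sum>k\<in>UNIV. max (y$k) 0)"
    by (simp add: sum.distrib sum_distrib_left)
  also have "\<dots> \<le> u * 1 + v * 1"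
    using x y uv unfolding Yv_def by (intro add_mono mult_left_mono) auto
  finally have 1: "(\<Sum>k\<in>UNIV. max ((u *\<^sub>R x + v *\<^sub>R y) $ k) 0) \<le> 1" using uv by simp
  have "(\<Sum>k\<in>UNIV. max (- (u *\<^sub>R x + v *\<^sub>R y) $ k) 0) \<le> (\<Sum>k\<in>UNIV. u * max (- x$k) 0 + v * max (- y$k) 0)"
  proof (intro sum_mono)
    fix k
    have "max (- (u *\<^sub>R x + v *\<^sub>R y) $ k) 0 = max (u * (- x$k) + v * (- y$k)) 0" by simp
    also have "\<dots> \<le> u * max (- x$k) 0 + v * max (- y$k) 0" by (rule max_convex[OF uv(1,2)])
    finally show "max (- (u *\<^sub>R x + v *\<^sub>R y) $ k) 0 \<le> u * max (- x$k) 0 + v * max (- y$k) 0" .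
  qed
  also have "\<dots> = u * (\<Sum>k\<in>UNIV. max (- x$k) 0) + v * (\<Sum>k\<in>UNIV. max (- y$k) 0)"
    by (simp add: sum.distrib sum_distrib_left)
  also have "\<dots> \<le> u * 1 + v * 1"
    using x y uv unfolding Yv_def by (intro add_mono mult_left_mono) auto
  finally have 2: "(\<Sum>k\<in>UNIV. max (- (u *\<^sub>R x + v *\<^sub>R y) $ k) 0) \<le> 1" using uv by simp
  show "u *\<^sub>R x + v *\<^sub>R y \<in> Yv" using 1 2 unfolding Yv_def by simp
qed

lemma Rt_sub: "(Rt :: (real^('n::finite)) set) \<subseteq> Yv"
proof
  fix r :: "real^'n" assume "r \<in> Rt"
  then obtain a b where ab: "a \<noteq> b" "r = Ev a - Ev b" unfolding Rt_def by auto
  have 1: "max (r $ k) 0 = (if a = Some k then 1 else 0)" for k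
    using ab by (auto simp: Ev_nth)
  have 2: "max (- r $ k) 0 = (if b = Some k then 1 else 0)" for k
    using ab by (auto simp: Ev_nth)
  show "r \<in> Yv" unfolding Yv_def
    by (simp add: 1 2 sum_delta_Some split: option.split)
qed



lemma zero_in_hull: "(0 :: real^('n::finite)) \<in> convex hull Rt"
proof -
  obtain k :: 'n where True by simp
  have a: "Ev (Some k) - Ev None \<in> (Rt :: (real^'n) set)" unfolding Rt_def by blast
  have b: "Ev None - Ev (Some k) \<in> (Rt :: (real^'n) set)" unfolding Rt_def by blast
  have "(1/2) *\<^sub>R (Ev (Some k) - Ev None) + (1/2) *\<^sub>R (Ev None - Ev (Some k)) \<in> convex hull (Rt :: (real^'n) set)"
    by (rule convexD[OF convex_convex_hull]) (use a b hull_inc in auto)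
  then show ?thesis by (simp add: algebra_simps)
qed

lemma Ev_diff_in_hull: "Ev a - Ev b \<in> convex hull (Rt :: (real^('n::finite)) set)"
proof (cases "a = b")
  case True then show ?thesis using zero_in_hull by simp
next
  case False then have "Ev a - Ev b \<in> (Rt :: (real^'n) set)" unfolding Rt_def by blast
  then show ?thesis by (rule hull_inc)
qed

lemma Yv_sub_hull: "(Yv :: (real^('n::finite)) set) \<subseteq> convex hull Rt"
proof
  fix y :: "real^'n" assume y: "y \<in> Yv"
  define P where "P = (\<Sum>k\<in>UNIV. max (y$k) 0)"
  define N where "N = (\<Sum>k\<in>UNIV. max (- (y$k)) 0)"
  have P1: "P \<le> 1" and N1: "N \<le> 1" using y unfolding Yv_def P_def N_def by auto
  have P0: "P \<ge> 0" and N0: "N \<ge> 0" unfolding P_def N_def by (auto intro: sum_nonneg)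
  have sy: "(\<Sum>k\<in>UNIV. y$k) = P - N"
    unfolding P_def N_def sum_subtractf[symmetric] by (intro sum.cong) simp_all
  define d where "d a = (case a of None \<Rightarrow> - (\<Sum>k\<in>UNIV. y$k) | Some k \<Rightarrow> y$k)" for a
  define p where "p a = max (d a) 0" for a
  define q where "q a = max (- d a) 0" for a
  define t where "t = max P N"
  have sp: "(\<Sum>a\<in>UNIV. p a) = t"
    unfolding sum_option p_def d_def t_def using sy by (simp add: P_def[symmetric])
  have sq: "(\<Sum>a\<in>UNIV. q a) = t"
    unfolding sum_option q_def d_def t_def using sy by (simp add: N_def[symmetric])
  have p0: "p a \<ge> 0" and q0: "q a \<ge> 0" for a unfolding p_def q_def by auto
  have t1: "t \<le> 1" and t0: "t \<ge> 0" unfolding t_def using P1 N1 P0 by auto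
  show "y \<in> convex hull Rt"
  proof (cases "t = 0")
    case True
    then have "P = 0" "N = 0" using P0 N0 unfolding t_def by auto
    then have "max (y$k) 0 = 0" "max (- (y$k)) 0 = 0" for k
      unfolding P_def N_def by (subst (asm) sum_nonneg_eq_0_iff; auto)+
    then have "y = 0" by (simp add: vec_eq_iff) (metis max.absorb_iff2 neg_le_0_iff_le order_antisym)
    then show ?thesis using zero_in_hull by simp
  next
    case False
    then have tp: "t > 0" using t0 by simp
    define w where "w ab = p (fst ab) * q (snd ab) / t^2" for ab :: "'n option \<times> 'n option"
    define z where "z = (\<Sum>ab\<in>UNIV \<times> UNIV. w ab *\<^sub>R (Ev (fst ab) - Ev (snd ab) :: real^'n))"
    have ws: "(\<Sum>ab\<in>UNIV \<times> UNIV. w ab) = 1"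
    proof -
      have "(\<Sum>ab\<in>UNIV \<times> UNIV. w ab) = (\<Sum>a\<in>UNIV. \<Sum>b\<in>UNIV. p a * q b / t^2)"
        unfolding w_def by (simp add: sum.cartesian_product case_prod_beta)
      also have "\<dots> = (\<Sum>a\<in>UNIV. p a) * (\<Sum>b\<in>UNIV. q b) / t^2"
        by (subst sum_product) (simp add: sum_divide_distrib)
      also have "\<dots> = 1" using sp sq tp by (simp add: power2_eq_square)
      finally show ?thesis .
    qed
    have z: "z \<in> convex hull Rt"
      unfolding z_def
      by (rule convex_sum[OF _ convex_convex_hull ws]) (auto simp: w_def p0 q0 Ev_diff_in_hull)
    have yz: "y = t *\<^sub>R z + (1 - t) *\<^sub>R 0"
    proof (subst vec_eq_iff, intro allI)
      fix k
      have "(t *\<^sub>R z) $ k = t * (\<Sum>ab\<in>UNIV \<times> UNIV. w ab * ((if fst ab = Some k then 1 else 0) - (if snd ab = Some k then 1 else 0)))"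
        unfolding z_def by (simp add: Ev_nth)
      also have "\<dots> = t * (\<Sum>a\<in>UNIV. \<Sum>b\<in>UNIV. p a * q b / t^2 * ((if a = Some k then 1 else 0) - (if b = Some k then 1 else 0)))"
        unfolding w_def by (simp add: sum.cartesian_product case_prod_beta)
      also have "\<dots> = t * (\<Sum>a\<in>UNIV. \<Sum>b\<in>UNIV. (if a = Some k then p a * q b / t^2 else 0) - (if b = Some k then p a * q b / t^2 else 0))"
        by (intro arg_cong[where f="\<lambda>x. t * x"] sum.cong refl) (auto simp: algebra_simps)
      also have "\<dots> = t * (p (Some k) * t / t^2 - t * q (Some k) / t^2)"
      proof -
        have h1: "(\<Sum>a\<in>UNIV. \<Sum>b\<in>UNIV. (if a = Some k then p a * q b / t^2 else 0)) = p (Some k) * t / t^2"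
        proof -
          have "(\<Sum>a\<in>UNIV. \<Sum>b\<in>UNIV. (if a = Some k then p a * q b / t^2 else 0)) = (\<Sum>a\<in>UNIV. (if a = Some k then p a * t / t^2 else 0))"
          proof (intro sum.cong refl)
            fix a
            have "(\<Sum>b\<in>UNIV. p a * q b / t^2) = p a * (\<Sum>b\<in>UNIV. q b) / t^2"
              by (simp add: sum_distrib_left sum_divide_distrib)
            then show "(\<Sum>b\<in>UNIV. (if a = Some k then p a * q b / t^2 else 0)) = (if a = Some k then p a * t / t^2 else 0)"
              using sq by (cases "a = Some k") simp_all
          qed
          also have "\<dots> = p (Some k) * t / t^2" by (simp add: sum.delta)
          finally show ?thesis .
        qed
        have h2: "(\<Sum>a\<in>UNIV. \<Sum>b\<in>UNIV. (if b = Some k then p a * q b / t^2 else 0)) = t * q (Some k) / t^2"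
        proof -
          have "(\<Sum>a\<in>UNIV. \<Sum>b\<in>UNIV. (if b = Some k then p a * q b / t^2 else 0)) = (\<Sum>a\<in>UNIV. p a * q (Some k) / t^2)"
            by (intro sum.cong refl) (simp add: sum.delta)
          also have "\<dots> = (\<Sum>a\<in>UNIV. p a) * q (Some k) / t^2"
            by (simp add: sum_distrib_right sum_divide_distrib)
          finally show ?thesis using sp by simp
        qed
        show ?thesis by (simp only: sum_subtractf h1 h2)
      qed
      also have "\<dots> = p (Some k) - q (Some k)" using tp by (simp add: power2_eq_square field_simps)
      also have "\<dots> = y $ k" unfolding p_def q_def d_def by auto
      finally show "y $ k = (t *\<^sub>R z + (1 - t) *\<^sub>R 0) $ k" by simp
    qed
    show ?thesis unfolding yz
      by (rule convexD[OF convex_convex_hull z zero_in_hull]) (use t0 t1 in auto)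
  qed
qed

lemma hull_Rt: "convex hull (Rt :: (real^('n::finite)) set) = Yv"
proof
  show "convex hull Rt \<subseteq> Yv" using hull_minimal[of Rt Yv convex] Rt_sub Yv_convex by blast
  show "Yv \<subseteq> convex hull Rt" by (rule Yv_sub_hull)
qed



definition Ssum :: "real^('n::{finite,linorder}) \<Rightarrow> real^('n::{finite,linorder})" where
  "Ssum y = (\<chi> k. \<Sum>j\<in>{..k}. y $ j)"

lemma Ssum_linear: "linear (Ssum :: real^('n::{finite,linorder}) \<Rightarrow> real^('n::{finite,linorder}))"
  by (rule linearI) (simp_all add: Ssum_def vec_eq_iff sum.distrib sum_distrib_left)

definition ind :: "'n::linorder option \<Rightarrow> 'n \<Rightarrow> real" where
  "ind a k = (case a of None \<Rightarrow> 0 | Some j \<Rightarrow> if j \<le> k then 1 else 0)"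

lemma Ssum_Ev: "Ssum (Ev a - Ev b :: real^('n::{finite,linorder})) = (\<chi> k. ind a k - ind b k)"
proof -
  have "(\<Sum>j\<in>{..k}. (if a = Some j then 1 else 0) :: real) = ind a k" for a and k :: 'n
    by (cases a) (auto simp: ind_def)
  then show ?thesis by (simp add: Ssum_def Ev_nth sum_subtractf vec_eq_iff)
qed

lemma image_Rt: "Ssum ` (Rt :: (real^('n::{finite,linorder})) set) = pos_roots_A \<union> uminus ` pos_roots_A"
proof
  define M :: 'n where "M = Max UNIV"
  have leM: "k \<le> M" for k unfolding M_def by simp
  show "Ssum ` (Rt :: (real^('n::{finite,linorder})) set) \<subseteq> pos_roots_A \<union> uminus ` pos_roots_A"
  proof
    fix r assume "r \<in> Ssum ` (Rt :: (real^('n::{finite,linorder})) set)"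
    then obtain a b where ab: "a \<noteq> b" "r = Ssum (Ev a - Ev b)" unfolding Rt_def by auto
    have key: "Ssum (Ev (Some i) - Ev c :: real^('n::{finite,linorder})) \<in> pos_roots_A" if "Some i \<noteq> c" "\<forall>j. c = Some j \<longrightarrow> i < j" for i :: 'n and c
    proof (cases c)
      case None
      have "Ssum (Ev (Some i) - Ev c) = interval_root i M"
      proof -
        have "ind (Some i) k - ind c k = (if i \<le> k \<and> k \<le> M then 1 else 0)" for k
          using None leM[of k] unfolding ind_def by auto
        then show ?thesis by (simp add: Ssum_Ev interval_root_def vec_eq_iff)
      qed
      then show ?thesis unfolding pos_roots_A_def using leM by blast
    next
      case (Some j)
      then have ij: "i < j" using that by auto
      define m where "m = Max {k. k < j}"
      have fin: "finite {k. k < j}" by simp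
      have im: "i \<le> m" unfolding m_def using ij fin by (intro Max_ge) auto
      have km: "k < j \<longleftrightarrow> k \<le> m" for k
      proof
        assume "k < j" then show "k \<le> m" unfolding m_def using fin by (intro Max_ge) auto
      next
        assume "k \<le> m"
        moreover have "m < j" unfolding m_def using fin ij by (subst Max_less_iff) auto
        ultimately show "k < j" by simp
      qed
      have "Ssum (Ev (Some i) - Ev c) = interval_root i m"
      proof -
        have "ind (Some i) k - ind c k = (if i \<le> k \<and> k \<le> m then 1 else 0)" for k
          using km[of k] Some ij unfolding ind_def by auto
        then show ?thesis by (simp add: Ssum_Ev interval_root_def vec_eq_iff)
      qed
      then show ?thesis unfolding pos_roots_A_def using im by blast
    qed
    have neg: "Ssum (Ev a - Ev b) = - Ssum (Ev b - Ev a)"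
      by (simp add: Ssum_Ev vec_eq_iff)
    show "r \<in> pos_roots_A \<union> uminus ` pos_roots_A"
    proof (cases a)
      case None
      then obtain j where b: "b = Some j" using ab by (cases b) auto
      have "Ssum (Ev b - Ev a) \<in> pos_roots_A" using key[of j a] None b by auto
      then show ?thesis using ab neg by auto
    next
      case (Some i)
      note ai = this
      show ?thesis
      proof (cases b)
        case None
        then show ?thesis using key[of i b] ai ab by auto
      next
        case (Some j)
        note bj = this
        show ?thesis
        proof (cases "i < j")
          case True then show ?thesis using key[of i b] ai bj ab by auto
        next
          case False
          then have "j < i" using ab ai bj by auto
          then have "Ssum (Ev b - Ev a) \<in> pos_roots_A" using key[of j a] ai bj by auto
          then show ?thesis using ab neg by auto
        qed
      qed
    qed
  qed
  show "pos_roots_A \<union> uminus ` pos_roots_A \<subseteq> Ssum ` (Rt :: (real^('n::{finite,linorder})) set)"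
  proof -
    have pos: "interval_root i j \<in> Ssum ` (Rt :: (real^('n::{finite,linorder})) set) \<and> - interval_root i j \<in> Ssum ` (Rt :: (real^('n::{finite,linorder})) set)" if "i \<le> j" for i j :: 'n
    proof -
      obtain a b where ab: "a \<noteq> b" "interval_root i j = Ssum (Ev a - Ev b :: real^('n::{finite,linorder}))"
      proof (cases "\<forall>k. k \<le> j")
        case True
        have "interval_root i j = Ssum (Ev (Some i) - Ev None :: real^('n::{finite,linorder}))"
        proof -
          have "ind (Some i) k - ind None k = (if i \<le> k \<and> k \<le> j then 1 else 0)" for k
            using True unfolding ind_def by auto
          then show ?thesis by (simp add: Ssum_Ev interval_root_def vec_eq_iff)
        qed
        then show ?thesis using that by blast
      next
        case False
        define m where "m = Min {k. j < k}"
        have fin: "finite {k. j < k}" by simp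
        have ne: "{k. j < k} \<noteq> {}" using False by (auto simp: not_le)
        have jm: "j < m" unfolding m_def using fin ne by (subst Min_gr_iff) auto
        have km: "m \<le> k \<longleftrightarrow> j < k" for k
        proof
          assume "j < k" then show "m \<le> k" unfolding m_def using fin by (intro Min_le) auto
        next
          assume "m \<le> k" then show "j < k" using jm by simp
        qed
        have "interval_root i j = Ssum (Ev (Some i) - Ev (Some m) :: real^('n::{finite,linorder}))"
        proof -
          have "ind (Some i) k - ind (Some m) k = (if i \<le> k \<and> k \<le> j then 1 else 0)" for k
            using km[of k] jm \<open>i \<le> j\<close> unfolding ind_def by auto
          then show ?thesis by (simp add: Ssum_Ev interval_root_def vec_eq_iff)
        qed
        moreover have "Some i \<noteq> Some m" using jm \<open>i \<le> j\<close> by auto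
        ultimately show ?thesis using that by blast
      qed
      have "- interval_root i j = Ssum (Ev b - Ev a :: real^('n::{finite,linorder}))"
        by (simp add: ab(2) Ssum_Ev vec_eq_iff)
      moreover have "Ev a - Ev b \<in> (Rt :: (real^('n::{finite,linorder})) set)" "Ev b - Ev a \<in> (Rt :: (real^('n::{finite,linorder})) set)"
        using ab(1) unfolding Rt_def by blast+
      ultimately show ?thesis using ab(2) by blast
    qed
    show ?thesis unfolding pos_roots_A_def using pos by blast
  qed
qed

lemma root_polytope_eq: "(root_polytope_A :: (real^('n::{finite,linorder})) set) = Ssum ` Yv"
  unfolding root_polytope_A_def image_Rt[symmetric] hull_Rt[symmetric]
  by (rule convex_hull_linear_image[OF Ssum_linear, symmetric])



lemma det_Ssum: "det (matrix (Ssum :: real^('m::{finite,wellorder}) \<Rightarrow> real^('m::{finite,wellorder}))) = 1"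
proof -
  have m: "matrix (Ssum :: real^('m::{finite,wellorder}) \<Rightarrow> real^('m::{finite,wellorder})) $ i $ j = (if j \<le> i then 1 else 0)" for i j
    by (simp add: matrix_def Ssum_def axis_def)
  have "det (matrix (Ssum :: real^('m::{finite,wellorder}) \<Rightarrow> real^('m::{finite,wellorder}))) = (\<Prod>i\<in>UNIV. matrix (Ssum :: real^('m::{finite,wellorder}) \<Rightarrow> real^('m::{finite,wellorder})) $ i $ i)"
    by (rule det_lowerdiagonal) (simp add: m)
  also have "\<dots> = 1" by (simp add: m)
  finally show ?thesis .
qed

lemma Yv_lmeasurable: "(Yv :: (real^('n::finite)) set) \<in> lmeasurable"
  unfolding Yv_YY by (rule lmeasurable_compact) (simp add: compact_eq_bounded_closed YY_closed YY_bounded)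

lemma Yv_measure: "measure lebesgue (Yv :: (real^('n::finite)) set) = real ((2 * CARD('n)) choose CARD('n)) / fact CARD('n)"
  unfolding Yv_YY YY_measure by simp

lemma measure_rp_wo: "measure lebesgue (root_polytope_A :: (real^('m::{finite,wellorder})) set)
   = real ((2 * CARD('m)) choose CARD('m)) / fact CARD('m)"
  unfolding root_polytope_eq
  by (simp add: measure_linear_image[OF Ssum_linear Yv_lmeasurable] det_Ssum Yv_measure)



typedef 'a wo = "UNIV :: 'a set" by auto

instantiation wo :: (linorder) linorder
begin
definition less_eq_wo :: "'a wo \<Rightarrow> 'a wo \<Rightarrow> bool" where "less_eq_wo x y = (Rep_wo x \<le> Rep_wo y)"
definition less_wo :: "'a wo \<Rightarrow> 'a wo \<Rightarrow> bool" where "less_wo x y = (Rep_wo x < Rep_wo y)"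
instance
  by standard (auto simp: less_eq_wo_def less_wo_def Rep_wo_inject[symmetric] less_le_not_le)
end

lemma UNIV_wo: "(UNIV :: 'a wo set) = Abs_wo ` UNIV"
  by (auto intro!: image_eqI[where x="Rep_wo _"] simp: Rep_wo_inverse)

instance wo :: (finite) finite
  by standard (simp add: UNIV_wo)

lemma card_wo: "CARD('a wo) = CARD('a)"
  unfolding UNIV_wo by (rule card_image) (simp add: inj_on_def Abs_wo_inject)

instance wo :: ("{finite,linorder}") wellorder
proof
  fix P :: "'a wo \<Rightarrow> bool" and a :: "'a wo"
  assume step: "\<And>x. (\<And>y. y < x \<Longrightarrow> P y) \<Longrightarrow> P x"
  have wf: "wf (Wellfounded.measure (\<lambda>x::'a wo. card {y. y < x}))" by simp
  show "P a"
  proof (induction a rule: wf_induct[OF wf])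
    case (1 x)
    show ?case
    proof (rule step)
      fix y assume "y < x"
      then have "{z. z < y} \<subset> {z. z < x}" by auto
      then have "card {z. z < y} < card {z. z < x}" by (rule psubset_card_mono[rotated]) simp
      then show "P y" using 1 by simp
    qed
  qed
qed

definition Rw :: "real^('n::{finite,linorder} wo) \<Rightarrow> real^('n::{finite,linorder})" where
  "Rw y = (\<chi> i. y $ Abs_wo i)"

definition Rw' :: "real^('n::{finite,linorder}) \<Rightarrow> real^('n::{finite,linorder} wo)" where
  "Rw' x = (\<chi> j. x $ Rep_wo j)"

lemma Rw_linear: "linear (Rw :: real^('n::{finite,linorder} wo) \<Rightarrow> real^('n::{finite,linorder}))"
  by (rule linearI) (simp_all add: Rw_def vec_eq_iff)

lemma Rw_Rw': "Rw (Rw' x) = x" "Rw' (Rw y) = y"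
  by (simp_all add: Rw_def Rw'_def vec_eq_iff Abs_wo_inverse Rep_wo_inverse)

lemma Rw_root: "Rw (interval_root i j) = interval_root (Rep_wo i) (Rep_wo j)"
  by (simp add: Rw_def interval_root_def vec_eq_iff less_eq_wo_def Abs_wo_inverse)

lemma Rw_pos: "Rw ` (pos_roots_A :: (real^('n::{finite,linorder} wo)) set) = pos_roots_A"
proof
  show "Rw ` (pos_roots_A :: (real^('n::{finite,linorder} wo)) set) \<subseteq> pos_roots_A"
    unfolding pos_roots_A_def by (auto simp: Rw_root less_eq_wo_def) blast
  show "(pos_roots_A :: (real^('n::{finite,linorder})) set) \<subseteq> Rw ` pos_roots_A"
  proof
    fix r :: "real^('n::{finite,linorder})" assume "r \<in> pos_roots_A"
    then obtain i j where ij: "i \<le> j" "r = interval_root i j" unfolding pos_roots_A_def by auto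
    have "r = Rw (interval_root (Abs_wo i) (Abs_wo j))" "Abs_wo i \<le> Abs_wo j"
      using ij by (simp_all add: Rw_root Abs_wo_inverse less_eq_wo_def)
    then show "r \<in> Rw ` pos_roots_A" unfolding pos_roots_A_def by blast
  qed
qed

lemma Rw_rp: "Rw ` (root_polytope_A :: (real^('n::{finite,linorder} wo)) set) = root_polytope_A"
proof -
  have "Rw ` (pos_roots_A \<union> uminus ` pos_roots_A :: (real^('n::{finite,linorder} wo)) set)
      = (pos_roots_A \<union> uminus ` pos_roots_A :: (real^('n::{finite,linorder})) set)"
  proof -
    have "Rw ` uminus ` (pos_roots_A :: (real^('n::{finite,linorder} wo)) set) = uminus ` Rw ` pos_roots_A"
      by (simp add: image_image linear_neg[OF Rw_linear])
    then show ?thesis by (simp add: image_Un Rw_pos)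
  qed
  then show ?thesis unfolding root_polytope_A_def convex_hull_linear_image[OF Rw_linear]
    by simp
qed

lemma prod_Basis_vec: "(\<Prod>b\<in>(Basis :: (real^('n::finite)) set). g (x \<bullet> b)) = (\<Prod>k\<in>UNIV. g (x $ k))"
proof -
  have inj: "inj (\<lambda>k::'n. axis k (1::real))" by (auto simp: inj_on_def axis_eq_axis)
  show ?thesis unfolding Basis_vec_real by (subst prod.reindex[OF inj]) (simp add: inner_axis)
qed

lemma lborel_Rw: "lborel = distr lborel borel (Rw :: real^('n::{finite,linorder} wo) \<Rightarrow> real^('n::{finite,linorder}))"
proof (rule lborel_eqI)
  fix l u :: "real^('n::{finite,linorder})"
  assume le: "\<And>b. b \<in> Basis \<Longrightarrow> l \<bullet> b \<le> u \<bullet> b"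
  have lek: "l $ k \<le> u $ k" for k using le[of "axis k 1"] by (simp add: inner_axis)
  have cont: "continuous_on UNIV (Rw :: real^('n::{finite,linorder} wo) \<Rightarrow> real^('n::{finite,linorder}))"
    by (rule linear_continuous_on[OF linear_conv_bounded_linear[THEN iffD1, OF Rw_linear]])
  have [measurable]: "(Rw :: real^('n::{finite,linorder} wo) \<Rightarrow> real^('n::{finite,linorder})) \<in> borel_measurable borel"
    by (rule borel_measurable_continuous_onI[OF cont])
  have pre: "Rw -` box l u = box (Rw' l) (Rw' u)"
  proof -
    have "y \<in> Rw -` box l u \<longleftrightarrow> y \<in> box (Rw' l) (Rw' u)" for y :: "real^('n::{finite,linorder} wo)"
    proof -
      have "(\<forall>i. l $ i < y $ Abs_wo i \<and> y $ Abs_wo i < u $ i) \<longleftrightarrow> (\<forall>j. l $ Rep_wo j < y $ j \<and> y $ j < u $ Rep_wo j)"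
        by (metis Abs_wo_inverse Rep_wo_inverse UNIV_I)
      then show ?thesis by (simp add: mem_box_cart Rw_def Rw'_def)
    qed
    then show ?thesis by auto
  qed
  have "emeasure (distr lborel borel Rw) (box l u) = emeasure lborel (Rw -` box l u \<inter> space lborel)"
    by (rule emeasure_distr) auto
  also have "\<dots> = emeasure lborel (box (Rw' l) (Rw' u))" using pre by simp
  also have "\<dots> = (\<Prod>b\<in>Basis. (Rw' u - Rw' l) \<bullet> b)"
    by (rule emeasure_lborel_box) (auto simp: Basis_vec_real inner_axis Rw'_def lek)
  also have "(\<Prod>b\<in>Basis. (Rw' u - Rw' l) \<bullet> b) = (\<Prod>j\<in>UNIV. u $ Rep_wo j - l $ Rep_wo j)"
    by (simp add: prod_Basis_vec[of "\<lambda>z. z"] Rw'_def)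
  also have "\<dots> = (\<Prod>k\<in>UNIV. u $ k - l $ k)"
  proof -
    have "bij_betw Rep_wo (UNIV :: 'n wo set) UNIV"
      by (rule bij_betwI[of _ _ _ Abs_wo]) (auto simp: Abs_wo_inverse Rep_wo_inverse)
    then show ?thesis by (rule prod.reindex_bij_betw)
  qed
  also have "\<dots> = (\<Prod>b\<in>Basis. (u - l) \<bullet> b)"
    by (simp add: prod_Basis_vec[of "\<lambda>z. z"])
  finally show "emeasure (distr lborel borel Rw) (box l u) = (\<Prod>b\<in>Basis. (u - l) \<bullet> b)" .
qed simp

lemma measure_Rw:
  assumes "compact (S :: (real^('n::{finite,linorder} wo)) set)"
  shows "measure lebesgue (Rw ` S) = measure lebesgue S"
proof -
  have cont: "continuous_on UNIV (Rw :: real^('n::{finite,linorder} wo) \<Rightarrow> real^('n::{finite,linorder}))"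
    by (rule linear_continuous_on[OF linear_conv_bounded_linear[THEN iffD1, OF Rw_linear]])
  have [measurable]: "(Rw :: real^('n::{finite,linorder} wo) \<Rightarrow> real^('n::{finite,linorder})) \<in> borel_measurable borel"
    by (rule borel_measurable_continuous_onI[OF cont])
  have cS: "compact (Rw ` S)" by (rule compact_continuous_image[OF continuous_on_subset[OF cont] assms]) simp
  have bS: "Rw ` S \<in> sets borel" using cS by (simp add: borel_compact)
  have bS': "S \<in> sets borel" using assms by (simp add: borel_compact)
  have "measure lebesgue (Rw ` S) = measure lborel (Rw ` S)" using bS by simp
  also have "\<dots> = measure (distr lborel borel Rw) (Rw ` S)" by (subst lborel_Rw) simp
  also have "\<dots> = measure lborel (Rw -` (Rw ` S) \<inter> space lborel)"
    by (rule measure_distr) (use bS in auto)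
  also have "Rw -` (Rw ` S) \<inter> space lborel = S"
    by (auto simp: image_iff) (metis Rw_Rw'(2))
  also have "measure lborel S = measure lebesgue S" using bS' by simp
  finally show ?thesis .
qed



lemma finite_pos: "finite (pos_roots_A :: (real^('n::{finite,linorder})) set)"
proof -
  have "pos_roots_A \<subseteq> (\<lambda>(i, j). interval_root i j :: real^('n::{finite,linorder})) ` UNIV"
    unfolding pos_roots_A_def by auto
  then show ?thesis by (rule finite_subset) simp
qed

lemma compact_rp: "compact (root_polytope_A :: (real^('n::{finite,linorder})) set)"
  unfolding root_polytope_A_def
  by (rule finite_imp_compact_convex_hull) (simp add: finite_pos)

lemma comb_identity:
  assumes "n \<ge> 1"
  shows "(\<Sum>i=1..n. ((n - 1) choose (i - 1)) * ((n + 1) choose i)) = (2 * n) choose n"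
proof -
  have "(\<Sum>i=1..n. ((n - 1) choose (i - 1)) * ((n + 1) choose i)) = (\<Sum>k<n. ((n - 1) choose k) * ((n + 1) choose (Suc k)))"
  proof -
    have "{1..n} = Suc ` {..<n}" by (simp add: atLeast1_atMost_eq_remove0 lessThan_Suc_atMost[symmetric] image_Suc_lessThan)
    then show ?thesis by (simp add: sum.reindex)
  qed
  also have "\<dots> = (\<Sum>k\<le>n. ((n - 1) choose k) * ((n + 1) choose (n - k)))"
  proof -
    have "(\<Sum>k\<le>n. ((n - 1) choose k) * ((n + 1) choose (n - k))) = (\<Sum>k<n. ((n - 1) choose k) * ((n + 1) choose (n - k)))"
      using assms by (simp add: lessThan_Suc_atMost[symmetric])
    also have "\<dots> = (\<Sum>k<n. ((n - 1) choose k) * ((n + 1) choose (Suc k)))"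
    proof (intro sum.cong refl)
      fix k assume "k \<in> {..<n}"
      then have "(n + 1) choose (Suc k) = (n + 1) choose (n + 1 - Suc k)" by (intro binomial_symmetric) auto
      then show "((n - 1) choose k) * ((n + 1) choose (n - k)) = ((n - 1) choose k) * ((n + 1) choose (Suc k))" by simp
    qed
    finally show ?thesis by simp
  qed
  also have "\<dots> = ((n - 1) + (n + 1)) choose n" by (rule vandermonde)
  also have "(n - 1) + (n + 1) = 2 * n" using assms by simp
  finally show ?thesis .
qed

theorem lemma4p2:
  fixes n :: nat
  assumes "n = CARD('n::{finite,linorder})"
  shows "int_vol (root_polytope_A :: (real^('n::{finite,linorder})) set)
           = real (\<Sum>i=1..n. ((n - 1) choose (i - 1)) * ((n + 1) choose i))
       \<and> (\<Sum>i=1..n. ((n - 1) choose (i - 1)) * ((n + 1) choose i)) = (2 * n) choose n"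
proof -
  have n1: "n \<ge> 1" using assms by (simp add: Suc_le_eq)
  have c: "(\<Sum>i=1..n. ((n - 1) choose (i - 1)) * ((n + 1) choose i)) = (2 * n) choose n"
    by (rule comb_identity[OF n1])
  have "measure lebesgue (root_polytope_A :: (real^('n::{finite,linorder})) set)
      = measure lebesgue (Rw ` (root_polytope_A :: (real^('n::{finite,linorder} wo)) set))"
    by (simp add: Rw_rp)
  also have "\<dots> = measure lebesgue (root_polytope_A :: (real^('n::{finite,linorder} wo)) set)"
    by (rule measure_Rw[OF compact_rp])
  also have "\<dots> = real ((2 * n) choose n) / fact n"
    by (simp add: measure_rp_wo card_wo assms)
  finally have "int_vol (root_polytope_A :: (real^('n::{finite,linorder})) set) = real ((2 * n) choose n)"
    unfolding int_vol_def using assms by simp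
  then show ?thesis using c by simp
qed

end
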